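(* For every $\varepsilon>0$ there exists $N$ such that for all $n\ge N$, every trifferent code $\mathcal C\subseteq\{0,1,2\}^n$ satisfies $|\mathcal C|\le(1+\varepsilon)\left(\tfrac32\right)^n$; i.e. $|\mathcal C|\le(1+o(1))(3/2)^n$.
   Context: Three distinct strings $x,y,z\in\{0,1,2\}^n$ are trifferent if there is a coordinate $i\in[n]$ with $x_i,y_i,z_i$ mutually distinct. A trifferent code of block length $n$ is a subset $\mathcal C\subseteq\{0,1,2\}^n$ in which any three distinct codewords are trifferent. *)

theory Defs
  imports Complex_Main "HOL-Library.FuncSet"
begin

text \<open>Strings in {0,1,2}^n are modelled as extensional functions from {0..<n} to {0,1,2}
  (value undefined outside {0..<n}).\<close>

definition ternary_strings :: "nat \<Rightarrow> (nat \<Rightarrow> nat) set" where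
  "ternary_strings n = PiE {0..<n} (\<lambda>_. {0,1,2})"

definition trifferent :: "nat \<Rightarrow> (nat \<Rightarrow> nat) \<Rightarrow> (nat \<Rightarrow> nat) \<Rightarrow> (nat \<Rightarrow> nat) \<Rightarrow> bool" where
  "trifferent n x y z \<longleftrightarrow> (\<exists>i<n. x i \<noteq> y i \<and> y i \<noteq> z i \<and> x i \<noteq> z i)"

definition trifferent_code :: "nat \<Rightarrow> (nat \<Rightarrow> nat) set \<Rightarrow> bool" where
  "trifferent_code n C \<longleftrightarrow> C \<subseteq> ternary_strings n \<and>
     (\<forall>x\<in>C. \<forall>y\<in>C. \<forall>z\<in>C. x \<noteq> y \<and> y \<noteq> z \<and> x \<noteq> z \<longrightarrow> trifferent n x y z)"

end

theory Submission
  imports Defs "HOL-Combinatorics.Multiset_Permutations" "HOL-Real_Asymp.Real_Asymp"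
begin

abbreviation T3 :: "nat set" where "T3 \<equiv> {0,1,2}"

lemma ternary_memD:
  assumes "z \<in> ternary_strings n" "i < n" shows "z i \<in> T3"
  using assms unfolding ternary_strings_def by (auto simp: PiE_iff)

lemma ternary_neq:
  assumes "x \<in> ternary_strings n" "y \<in> ternary_strings n" "x \<noteq> y"
  shows "\<exists>i<n. x i \<noteq> y i"
  using assms unfolding ternary_strings_def
  by (metis PiE_ext atLeastLessThan_iff zero_le)

lemma finite_ternary: "finite (ternary_strings n)"
  unfolding ternary_strings_def by (simp add: finite_PiE)

lemma card_ternary: "card (ternary_strings n) = 3 ^ n"
  unfolding ternary_strings_def by (simp add: card_PiE numeral_3_eq_3)

lemma card_three:
  assumes "3 \<le> card A"
  obtains x y z where "x \<in> A" "y \<in> A" "z \<in> A" "x \<noteq> y" "y \<noteq> z" "x \<noteq> z"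
proof -
  have fA: "finite A" using assms card.infinite by fastforce
  obtain x where x: "x \<in> A" using assms by fastforce
  have c1: "2 \<le> card (A - {x})" using assms x fA by (simp add: card_Diff_singleton)
  have "A - {x} \<noteq> {}" using c1 by (metis card.empty not_numeral_le_zero)
  then obtain y where y: "y \<in> A - {x}" by blast
  have c2: "1 \<le> card (A - {x} - {y})" using c1 y fA by (simp add: card_Diff_singleton)
  have "A - {x} - {y} \<noteq> {}" using c2 by (metis card.empty not_one_le_zero)
  then obtain z where z: "z \<in> A - {x} - {y}" by blast
  show ?thesis using that x y z by blast
qed

lemma card_filter_sum:
  assumes "finite B" shows "card {b\<in>B. Q b} = (\<Sum>b\<in>B. if Q b then 1 else 0)"
proof -
  have "(\<Sum>b\<in>B. if Q b then 1 else 0) = card (B \<inter> {b. Q b})" using assms by (simp add: sum.If_cases)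
  moreover have "B \<inter> {b. Q b} = {b\<in>B. Q b}" by auto
  ultimately show ?thesis by simp
qed

lemma sum_card_swap:
  assumes "finite A" "finite B"
  shows "(\<Sum>a\<in>A. card {b\<in>B. P a b}) = (\<Sum>b\<in>B. card {a\<in>A. P a b})"
proof -
  have "(\<Sum>a\<in>A. card {b\<in>B. P a b}) = (\<Sum>a\<in>A. \<Sum>b\<in>B. if P a b then 1 else 0)"
    using assms by (simp add: card_filter_sum)
  also have "\<dots> = (\<Sum>b\<in>B. \<Sum>a\<in>A. if P a b then 1 else 0)" by (rule sum.swap)
  also have "\<dots> = (\<Sum>b\<in>B. card {a\<in>A. P a b})"
    using assms by (simp add: card_filter_sum)
  finally show ?thesis .
qed

lemma PiE_filter: "{s \<in> PiE I A. \<forall>i\<in>I. s i \<notin> B i} = PiE I (\<lambda>i. A i - B i)"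
  apply (rule set_eqI)
  apply (simp add: PiE_iff)
  by blast

lemma card_avoid_gen:
  assumes "finite I" "\<forall>i\<in>I. z i \<in> T3"
  shows "card {s \<in> PiE I (\<lambda>_. T3). \<forall>i\<in>I. s i \<noteq> z i} = 2 ^ card I"
proof -
  have "{s \<in> PiE I (\<lambda>_. T3). \<forall>i\<in>I. s i \<noteq> z i} = PiE I (\<lambda>i. T3 - {z i})"
    using PiE_filter[of I "\<lambda>_. T3" "\<lambda>i. {z i}"] by simp
  moreover have "card (PiE I (\<lambda>i. T3 - {z i})) = (\<Prod>i\<in>I. card (T3 - {z i}))"
    using assms by (simp add: card_PiE)
  moreover have "(\<Prod>i\<in>I. card (T3 - {z i})) = (\<Prod>i\<in>I. 2)"
    by (rule prod.cong) (use assms in auto)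
  ultimately show ?thesis by simp
qed

lemma elias_gen:
  assumes fI: "finite I" and fC: "finite C"
    and vals: "\<forall>z\<in>C. \<forall>i\<in>I. z i \<in> T3"
    and trif: "\<forall>x\<in>C. \<forall>y\<in>C. \<forall>z\<in>C. x \<noteq> y \<and> y \<noteq> z \<and> x \<noteq> z \<longrightarrow>
                 (\<exists>i\<in>I. x i \<noteq> y i \<and> y i \<noteq> z i \<and> x i \<noteq> z i)"
  shows "card C * 2 ^ card I \<le> 2 * 3 ^ card I"
proof -
  let ?P = "PiE I (\<lambda>_. T3)"
  have fP: "finite ?P" using fI by (simp add: finite_PiE)
  have "card C * 2 ^ card I = (\<Sum>z\<in>C. card {s\<in>?P. \<forall>i\<in>I. s i \<noteq> z i})"
    using card_avoid_gen[OF fI] vals by simp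
  also have "\<dots> = (\<Sum>s\<in>?P. card {z\<in>C. \<forall>i\<in>I. s i \<noteq> z i})"
    by (rule sum_card_swap[OF fC fP])
  also have "\<dots> \<le> (\<Sum>s\<in>?P. 2)"
  proof (rule sum_mono)
    fix s assume s: "s \<in> ?P"
    show "card {z\<in>C. \<forall>i\<in>I. s i \<noteq> z i} \<le> 2"
    proof (rule ccontr)
      assume "\<not> ?thesis"
      then have "3 \<le> card {z\<in>C. \<forall>i\<in>I. s i \<noteq> z i}" by simp
      then obtain x y z where xyz: "x \<in> {z\<in>C. \<forall>i\<in>I. s i \<noteq> z i}" "y \<in> {z\<in>C. \<forall>i\<in>I. s i \<noteq> z i}"
          "z \<in> {z\<in>C. \<forall>i\<in>I. s i \<noteq> z i}" "x \<noteq> y" "y \<noteq> z" "x \<noteq> z" by (rule card_three)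
      then obtain i where i: "i \<in> I" "x i \<noteq> y i" "y i \<noteq> z i" "x i \<noteq> z i" using trif by blast
      have "x i \<in> T3" "y i \<in> T3" "z i \<in> T3" "s i \<in> T3" using vals xyz i s by (auto simp: PiE_iff)
      moreover have "s i \<noteq> x i" "s i \<noteq> y i" "s i \<noteq> z i" using xyz i by auto
      ultimately show False using i by auto
    qed
  qed
  also have "\<dots> = 2 * 3 ^ card I" using fI by (simp add: card_PiE numeral_3_eq_3)
  finally show ?thesis .
qed

definition surv :: "nat \<Rightarrow> (nat\<Rightarrow>nat) set \<Rightarrow> (nat\<Rightarrow>nat) \<Rightarrow> (nat\<Rightarrow>nat) set" where
  "surv n C s = {z\<in>C. \<forall>i<n. z i \<noteq> s i}"

definition agr :: "nat \<Rightarrow> (nat\<Rightarrow>nat) \<Rightarrow> (nat\<Rightarrow>nat) \<Rightarrow> nat" where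
  "agr n x y = card {i. i < n \<and> x i = y i}"

definition dst :: "nat \<Rightarrow> (nat\<Rightarrow>nat) \<Rightarrow> (nat\<Rightarrow>nat) \<Rightarrow> nat" where
  "dst n x y = card {i. i < n \<and> x i \<noteq> y i}"

lemma agr_dst: "agr n x y + dst n x y = n"
proof -
  have "{i. i < n \<and> x i = y i} \<union> {i. i < n \<and> x i \<noteq> y i} = {..<n}" by auto
  moreover have "card ({i. i < n \<and> x i = y i} \<union> {i. i < n \<and> x i \<noteq> y i}) =
     card {i. i < n \<and> x i = y i} + card {i. i < n \<and> x i \<noteq> y i}"
    by (rule card_Un_disjoint) auto
  ultimately show ?thesis unfolding agr_def dst_def by simp
qed

lemma tc_finite: "trifferent_code n C \<Longrightarrow> finite C"
  unfolding trifferent_code_def using finite_ternary finite_subset by blast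

lemma tc_sub: "trifferent_code n C \<Longrightarrow> z \<in> C \<Longrightarrow> z \<in> ternary_strings n"
  unfolding trifferent_code_def by blast

lemma tc_trif: "trifferent_code n C \<Longrightarrow> x \<in> C \<Longrightarrow> y \<in> C \<Longrightarrow> z \<in> C \<Longrightarrow>
   x \<noteq> y \<Longrightarrow> y \<noteq> z \<Longrightarrow> x \<noteq> z \<Longrightarrow> \<exists>i<n. x i \<noteq> y i \<and> y i \<noteq> z i \<and> x i \<noteq> z i"
  unfolding trifferent_code_def trifferent_def by blast

lemma surv_le2:
  assumes tc: "trifferent_code n C" and s: "s \<in> ternary_strings n"
  shows "card (surv n C s) \<le> 2"
proof (rule ccontr)
  assume "\<not> ?thesis"
  then have "3 \<le> card (surv n C s)" by simp
  then obtain x y z where xyz: "x \<in> surv n C s" "y \<in> surv n C s"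
      "z \<in> surv n C s" "x \<noteq> y" "y \<noteq> z" "x \<noteq> z" by (rule card_three)
  then obtain i where i: "i < n" "x i \<noteq> y i" "y i \<noteq> z i" "x i \<noteq> z i"
    using tc_trif[OF tc] unfolding surv_def by blast
  have "x i \<in> T3" "y i \<in> T3" "z i \<in> T3" "s i \<in> T3"
    using xyz i s tc_sub[OF tc] ternary_memD unfolding surv_def by blast+
  moreover have "s i \<noteq> x i" "s i \<noteq> y i" "s i \<noteq> z i" using xyz i unfolding surv_def by auto
  ultimately show False using i by auto
qed

lemma sum_surv:
  assumes tc: "trifferent_code n C"
  shows "(\<Sum>s\<in>ternary_strings n. card (surv n C s)) = card C * 2 ^ n"
proof -
  have fC: "finite C" using tc by (rule tc_finite)
  have "(\<Sum>s\<in>ternary_strings n. card (surv n C s)) =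
        (\<Sum>s\<in>ternary_strings n. card {z\<in>C. \<forall>i\<in>{0..<n}. s i \<noteq> z i})"
  proof -
    have "\<And>s. {z\<in>C. \<forall>i<n. z i \<noteq> s i} = {z\<in>C. \<forall>i\<in>{0..<n}. s i \<noteq> z i}"
      by force
    then show ?thesis unfolding surv_def by simp
  qed
  also have "\<dots> = (\<Sum>z\<in>C. card {s\<in>ternary_strings n. \<forall>i\<in>{0..<n}. s i \<noteq> z i})"
    by (rule sum_card_swap[OF finite_ternary fC])
  also have "\<dots> = (\<Sum>z\<in>C. 2 ^ n)"
  proof (rule sum.cong)
    fix z assume z: "z \<in> C"
    have "\<forall>i\<in>{0..<n}. z i \<in> T3"
    proof
      fix i assume "i \<in> {0..<n}"
      then show "z i \<in> T3" using ternary_memD[OF tc_sub[OF tc z]] by simp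
    qed
    then show "card {s\<in>ternary_strings n. \<forall>i\<in>{0..<n}. s i \<noteq> z i} = 2 ^ n"
      using card_avoid_gen[of "{0..<n}" z] unfolding ternary_strings_def by simp
  qed simp
  finally show ?thesis by simp
qed

lemma offdiag_count:
  assumes "finite C" "S \<subseteq> C"
  shows "(\<Sum>x\<in>C. \<Sum>y\<in>C-{x}. if x \<in> S \<and> y \<in> S then 1 else 0) = card S * (card S - 1)"
proof -
  have fS: "finite S" using assms finite_subset by blast
  have "(\<Sum>x\<in>C. \<Sum>y\<in>C-{x}. if x \<in> S \<and> y \<in> S then 1 else 0) =
        (\<Sum>x\<in>C. if x \<in> S then card (S - {x}) else 0)"
  proof (rule sum.cong)
    fix x assume x: "x \<in> C"
    show "(\<Sum>y\<in>C-{x}. if x \<in> S \<and> y \<in> S then 1 else (0::nat)) = (if x \<in> S then card (S - {x}) else 0)"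
    proof (cases "x \<in> S")
      case True
      have "(\<Sum>y\<in>C-{x}. if x \<in> S \<and> y \<in> S then 1 else (0::nat)) = card {y\<in>C-{x}. y \<in> S}"
        using True assms card_filter_sum[of "C-{x}" "\<lambda>y. y \<in> S"] by simp
      also have "{y\<in>C-{x}. y \<in> S} = S - {x}" using assms by auto
      finally show ?thesis using True by simp
    qed simp
  qed simp
  also have "\<dots> = (\<Sum>x\<in>S. card (S - {x}))"
    using assms by (simp add: sum.If_cases Int_absorb1)
  also have "\<dots> = card S * (card S - 1)" using fS by simp
  finally show ?thesis .
qed

lemma card_avoid2:
  assumes x: "x \<in> ternary_strings n" and y: "y \<in> ternary_strings n"
  shows "card {s\<in>ternary_strings n. x \<in> surv n {x,y} s \<and> y \<in> surv n {x,y} s} = 2 ^ agr n x y"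
proof -
  have "{s\<in>ternary_strings n. x \<in> surv n {x,y} s \<and> y \<in> surv n {x,y} s} =
        PiE {0..<n} (\<lambda>i. T3 - {x i, y i})"
  proof -
    have "{s\<in>ternary_strings n. x \<in> surv n {x,y} s \<and> y \<in> surv n {x,y} s} =
          {s \<in> PiE {0..<n} (\<lambda>_. T3). \<forall>i\<in>{0..<n}. s i \<notin> {x i, y i}}"
      unfolding surv_def ternary_strings_def by force
    then show ?thesis using PiE_filter[of "{0..<n}" "\<lambda>_. T3" "\<lambda>i. {x i, y i}"] by simp
  qed
  then have "card {s\<in>ternary_strings n. x \<in> surv n {x,y} s \<and> y \<in> surv n {x,y} s} =
      (\<Prod>i\<in>{0..<n}. card (T3 - {x i, y i}))" by (simp add: card_PiE)
  also have "\<dots> = (\<Prod>i\<in>{0..<n}. if x i = y i then 2 else 1)"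
  proof (rule prod.cong)
    fix i assume "i \<in> {0..<n}"
    then have "x i \<in> T3" "y i \<in> T3" using x y ternary_memD by auto
    then show "card (T3 - {x i, y i}) = (if x i = y i then 2 else 1)" by auto
  qed simp
  also have "\<dots> = 2 ^ card {i\<in>{0..<n}. x i = y i}"
    by (simp add: prod.If_cases Int_def)
  also have "{i\<in>{0..<n}. x i = y i} = {i. i < n \<and> x i = y i}" by auto
  finally show ?thesis unfolding agr_def .
qed

lemma sum_pairs:
  assumes tc: "trifferent_code n C"
  shows "(\<Sum>s\<in>ternary_strings n. card (surv n C s) * (card (surv n C s) - 1)) =
         (\<Sum>x\<in>C. \<Sum>y\<in>C-{x}. 2 ^ agr n x y)"
proof -
  have fC: "finite C" using tc by (rule tc_finite)
  have "(\<Sum>s\<in>ternary_strings n. card (surv n C s) * (card (surv n C s) - 1)) =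
        (\<Sum>s\<in>ternary_strings n. \<Sum>x\<in>C. \<Sum>y\<in>C-{x}. if x \<in> surv n C s \<and> y \<in> surv n C s then 1 else 0)"
    by (intro sum.cong refl offdiag_count[symmetric] fC) (auto simp: surv_def)
  also have "\<dots> = (\<Sum>x\<in>C. \<Sum>y\<in>C-{x}. \<Sum>s\<in>ternary_strings n. if x \<in> surv n C s \<and> y \<in> surv n C s then 1 else 0)"
    by (simp add: sum.swap[of _ "ternary_strings n"])
  also have "\<dots> = (\<Sum>x\<in>C. \<Sum>y\<in>C-{x}. 2 ^ agr n x y)"
  proof (intro sum.cong refl)
    fix x y assume x: "x \<in> C" and y: "y \<in> C - {x}"
    have xt: "x \<in> ternary_strings n" and yt: "y \<in> ternary_strings n" using x y tc_sub[OF tc] by auto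
    have "(\<Sum>s\<in>ternary_strings n. if x \<in> surv n C s \<and> y \<in> surv n C s then 1 else (0::nat)) =
          card {s\<in>ternary_strings n. x \<in> surv n {x,y} s \<and> y \<in> surv n {x,y} s}"
      using x y by (simp add: card_filter_sum finite_ternary surv_def)
    also have "\<dots> = 2 ^ agr n x y" by (rule card_avoid2[OF xt yt])
    finally show "(\<Sum>s\<in>ternary_strings n. if x \<in> surv n C s \<and> y \<in> surv n C s then 1 else (0::nat)) = 2 ^ agr n x y" .
  qed
  finally show ?thesis .
qed

fun Hf :: "nat \<Rightarrow> nat \<Rightarrow> real" where
  "Hf 0 d = 0"
| "Hf (Suc m) d = 3/2 * real (Suc m) / real (Suc m + d) * (1/3 + Hf m d)"

lemma sum_perms_cons:
  assumes "finite S" "S \<noteq> {}"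
  shows "(\<Sum>\<pi>\<in>permutations_of_set S. g \<pi>) = (\<Sum>a\<in>S. \<Sum>\<pi>\<in>permutations_of_set (S - {a}). g (a # \<pi>))"
proof -
  have "(\<Sum>\<pi>\<in>permutations_of_set S. g \<pi>) =
        (\<Sum>\<pi>\<in>(\<Union>a\<in>S. (\<lambda>xs. a # xs) ` permutations_of_set (S - {a})). g \<pi>)"
    using permutations_of_set_nonempty[OF assms(2)] by simp
  also have "\<dots> = (\<Sum>a\<in>S. \<Sum>\<pi>\<in>(\<lambda>xs. a # xs) ` permutations_of_set (S - {a}). g \<pi>)"
    by (rule sum.UNION_disjoint) (use assms in auto)
  also have "\<dots> = (\<Sum>a\<in>S. \<Sum>\<pi>\<in>permutations_of_set (S - {a}). g (a # \<pi>))"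
  proof (rule sum.cong[OF refl])
    fix a assume "a \<in> S"
    have "inj_on ((#) a) (permutations_of_set (S - {a}))" by (auto simp: inj_on_def)
    then show "(\<Sum>\<pi>\<in>(\<lambda>xs. a # xs) ` permutations_of_set (S - {a}). g \<pi>) =
               (\<Sum>\<pi>\<in>permutations_of_set (S - {a}). g (a # \<pi>))"
      by (simp add: sum.reindex)
  qed
  finally show ?thesis .
qed

lemma perm_sum:
  assumes "finite S"
  shows "(\<Sum>\<pi>\<in>permutations_of_set S. (3/2::real) ^ length (takeWhile P \<pi>)) =
         fact (card S) * (1 + Hf (card {i\<in>S. P i}) (card {i\<in>S. \<not> P i}))"
  using assms
proof (induction "card S" arbitrary: S)
  case 0
  then have "S = {}" by simp
  then show ?case by simp
next
  case (Suc k)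
  then have fS: "finite S" and ne: "S \<noteq> {}" by auto
  define m where "m = card {i\<in>S. P i}"
  define d where "d = card {i\<in>S. \<not> P i}"
  have md: "m + d = Suc k"
  proof -
    have "card ({i\<in>S. P i} \<union> {i\<in>S. \<not> P i}) = m + d"
      unfolding m_def d_def by (rule card_Un_disjoint) (use fS in auto)
    moreover have "{i\<in>S. P i} \<union> {i\<in>S. \<not> P i} = S" by auto
    ultimately show ?thesis using Suc.hyps(2) by simp
  qed
  have IH: "\<And>a. a \<in> S \<Longrightarrow> (\<Sum>\<pi>\<in>permutations_of_set (S - {a}). (3/2::real) ^ length (takeWhile P \<pi>)) =
         fact k * (1 + Hf (card {i\<in>S - {a}. P i}) (card {i\<in>S - {a}. \<not> P i}))"
  proof -
    fix a assume a: "a \<in> S"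
    have "k = card (S - {a})" using Suc.hyps(2) a fS by simp
    then show "?thesis a" using Suc.hyps(1)[of "S - {a}"] fS by simp
  qed
  have "(\<Sum>\<pi>\<in>permutations_of_set S. (3/2::real) ^ length (takeWhile P \<pi>)) =
        (\<Sum>a\<in>S. \<Sum>\<pi>\<in>permutations_of_set (S - {a}). (3/2::real) ^ length (takeWhile P (a # \<pi>)))"
    by (rule sum_perms_cons[OF fS ne])
  also have "\<dots> = (\<Sum>a\<in>S. if P a then 3/2 * (fact k * (1 + Hf (m - 1) d)) else fact k)"
  proof (rule sum.cong)
    fix a assume a: "a \<in> S"
    show "(\<Sum>\<pi>\<in>permutations_of_set (S - {a}). (3/2::real) ^ length (takeWhile P (a # \<pi>))) =
          (if P a then 3/2 * (fact k * (1 + Hf (m - 1) d)) else fact k)"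
    proof (cases "P a")
      case True
      have c1: "card {i\<in>S - {a}. P i} = m - 1"
      proof -
        have "{i\<in>S - {a}. P i} = {i\<in>S. P i} - {a}" by auto
        then show ?thesis unfolding m_def using fS a True by (simp add: card_Diff_singleton)
      qed
      have c2: "card {i\<in>S - {a}. \<not> P i} = d"
      proof -
        have "{i\<in>S - {a}. \<not> P i} = {i\<in>S. \<not> P i}" using True by auto
        then show ?thesis unfolding d_def by simp
      qed
      have "(\<Sum>\<pi>\<in>permutations_of_set (S - {a}). (3/2::real) ^ length (takeWhile P (a # \<pi>))) =
            (\<Sum>\<pi>\<in>permutations_of_set (S - {a}). 3/2 * (3/2::real) ^ length (takeWhile P \<pi>))"
        using True by simp
      also have "\<dots> = 3/2 * (\<Sum>\<pi>\<in>permutations_of_set (S - {a}). (3/2::real) ^ length (takeWhile P \<pi>))"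
        by (simp add: sum_distrib_left)
      also have "\<dots> = 3/2 * (fact k * (1 + Hf (m - 1) d))" using IH[OF a] c1 c2 by simp
      finally show ?thesis using True by simp
    next
      case False
      have "card (S - {a}) = k" using Suc.hyps(2) a fS by simp
      then show ?thesis using False fS by simp
    qed
  qed simp
  also have "\<dots> = real m * (3/2 * (fact k * (1 + Hf (m - 1) d))) + real d * fact k"
    using fS by (simp add: sum.If_cases m_def d_def Int_def)
  also have "\<dots> = fact (Suc k) * (1 + Hf m d)"
  proof (cases m)
    case 0
    then have "d = Suc k" using md by simp
    then show ?thesis using 0 by simp
  next
    case (Suc m')
    have kk: "k = m' + d" using md Suc by simp
    have e2: "Hf m d = 3/2 * real (Suc m') / real (Suc k) * (1/3 + Hf m' d)"
      using Suc kk by simp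
    have e1: "fact (Suc k) = real (Suc k) * (fact k :: real)" by simp
    show ?thesis unfolding e1 e2 using Suc by (simp add: kk field_simps)
  qed
  finally show ?case unfolding m_def d_def using Suc.hyps(2) by simp
qed

definition Gset :: "nat \<Rightarrow> nat list \<Rightarrow> (nat\<Rightarrow>nat) \<Rightarrow> (nat\<Rightarrow>nat) \<Rightarrow> (nat\<Rightarrow>nat) set" where
  "Gset n \<pi> x y = {s \<in> ternary_strings n. (\<forall>i<n. x i \<noteq> y i \<longrightarrow> s i = 3 - x i - y i) \<and>
      (\<exists>i<n. s i = x i) \<and> (\<forall>i<n. s i = x i \<longrightarrow> i \<in> set (takeWhile (\<lambda>j. x j = y j) \<pi>))}"

lemma third_eq:
  assumes "a \<in> T3" "b \<in> T3" "c \<in> T3" "a \<noteq> b" "c \<noteq> a" "c \<noteq> b"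
  shows "c = 3 - a - b"
  using assms by auto

lemma third_ne:
  assumes "a \<in> T3" "b \<in> T3" "a \<noteq> b"
  shows "3 - a - b \<noteq> a" "3 - a - b \<noteq> b" "3 - a - b \<in> T3"
  using assms by auto

lemma G_surv_empty:
  assumes tc: "trifferent_code n C" and x: "x \<in> C" and y: "y \<in> C" and xy: "x \<noteq> y"
    and s: "s \<in> Gset n \<pi> x y"
  shows "surv n C s = {}"
proof (rule ccontr)
  assume "surv n C s \<noteq> {}"
  then obtain z where z: "z \<in> C" "\<forall>i<n. z i \<noteq> s i" unfolding surv_def by auto
  from s obtain i0 where i0: "i0 < n" "s i0 = x i0" unfolding Gset_def by auto
  have sD: "\<forall>i<n. x i \<noteq> y i \<longrightarrow> s i = 3 - x i - y i" using s unfolding Gset_def by auto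
  have xt: "x \<in> ternary_strings n" "y \<in> ternary_strings n" "z \<in> ternary_strings n"
    using x y z tc_sub[OF tc] by auto
  have "x i0 = y i0"
  proof (rule ccontr)
    assume "x i0 \<noteq> y i0"
    then have "s i0 = 3 - x i0 - y i0" using sD i0 by auto
    then show False using third_ne[of "x i0" "y i0"] i0 xt ternary_memD \<open>x i0 \<noteq> y i0\<close> by auto
  qed
  then have "z \<noteq> x" "z \<noteq> y" using z i0 by auto
  then obtain i where i: "i < n" "x i \<noteq> y i" "y i \<noteq> z i" "x i \<noteq> z i"
    using tc_trif[OF tc x y z(1) xy] by blast
  have "z i = 3 - x i - y i" using third_eq[of "x i" "y i" "z i"] i xt ternary_memD by auto
  then show False using sD i z by auto
qed

lemma list_cross:
  assumes "distinct (a1 @ b1)" "a1 @ b1 = a2 @ b2"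
    "u \<in> set a1" "v \<in> set b1" "v \<in> set a2" "u \<in> set b2"
  shows False
proof (cases "length a1 \<le> length a2")
  case True
  then obtain r where "a2 = a1 @ r" using assms(2)
    by (metis append_eq_append_conv_if append_take_drop_id)
  then have "u \<in> set a2" using assms(3) by simp
  moreover have "distinct (a2 @ b2)" using assms(1,2) by simp
  ultimately show False using assms(6) by auto
next
  case False
  then obtain r where "a1 = a2 @ r" using assms(2)
    by (metis append_eq_append_conv_if append_take_drop_id nat_le_linear)
  then have "v \<in> set a1" using assms(5) by simp
  then show False using assms(1,4) by auto
qed

lemma in_dropWhile:
  assumes "e \<in> set \<pi>" "\<not> P e"
  shows "e \<in> set (dropWhile P \<pi>)"
proof -
  have "e \<notin> set (takeWhile P \<pi>)" using assms(2) set_takeWhileD by fastforce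
  then show ?thesis using assms(1) takeWhile_dropWhile_id[of P \<pi>]
    by (metis Un_iff set_append)
qed

lemma aux_cross:
  assumes tc: "trifferent_code n C" and x: "x \<in> C" and y: "y \<in> C" and xy: "x \<noteq> y"
    and x': "x' \<in> C" and y': "y' \<in> C"
    and s: "s \<in> Gset n \<pi> x y" and s': "s \<in> Gset n \<pi> x' y'"
    and \<pi>: "\<pi> \<in> permutations_of_set {0..<n}"
    and z: "z \<in> C" "z \<noteq> x" "z \<noteq> y" "z = x' \<or> z = y'"
  shows "\<exists>e. e \<in> set (dropWhile (\<lambda>j. x j = y j) \<pi>) \<and> e \<in> set (takeWhile (\<lambda>j. x' j = y' j) \<pi>)"
proof -
  have sD: "\<forall>i<n. x i \<noteq> y i \<longrightarrow> s i = 3 - x i - y i" using s unfolding Gset_def by auto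
  have sD': "\<forall>i<n. x' i \<noteq> y' i \<longrightarrow> s i = 3 - x' i - y' i" using s' unfolding Gset_def by auto
  have sF': "\<forall>i<n. s i = x' i \<longrightarrow> i \<in> set (takeWhile (\<lambda>j. x' j = y' j) \<pi>)"
    using s' unfolding Gset_def by auto
  have xt: "x \<in> ternary_strings n" "y \<in> ternary_strings n" "z \<in> ternary_strings n"
    "x' \<in> ternary_strings n" "y' \<in> ternary_strings n"
    using x y z x' y' tc_sub[OF tc] by auto
  obtain i where i: "i < n" "x i \<noteq> y i" "y i \<noteq> z i" "x i \<noteq> z i"
    using tc_trif[OF tc x y z(1) xy] z by metis
  have "z i = 3 - x i - y i" using third_eq[of "x i" "y i" "z i"] i xt ternary_memD by auto
  then have szi: "s i = z i" using sD i by auto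
  have "s i = x' i"
  proof (cases "z = x'")
    case False
    then have zy: "z = y'" using z by auto
    show ?thesis
    proof (rule ccontr)
      assume "s i \<noteq> x' i"
      then have "x' i \<noteq> y' i" using szi zy by auto
      then have "s i = 3 - x' i - y' i" using sD' i by auto
      then show False using third_ne[of "x' i" "y' i"] i xt ternary_memD szi zy \<open>x' i \<noteq> y' i\<close>
        by auto
    qed
  qed (use szi in auto)
  then have "i \<in> set (takeWhile (\<lambda>j. x' j = y' j) \<pi>)" using sF' i by auto
  moreover have "i \<in> set (dropWhile (\<lambda>j. x j = y j) \<pi>)"
    using in_dropWhile[of i \<pi> "\<lambda>j. x j = y j"] i \<pi> by (auto dest: permutations_of_setD)
  ultimately show ?thesis by blast
qed

lemma pair_unique:
  assumes tc: "trifferent_code n C" and x: "x \<in> C" and y: "y \<in> C" and xy: "x \<noteq> y"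
    and x': "x' \<in> C" and y': "y' \<in> C" and xy': "x' \<noteq> y'"
    and s: "s \<in> Gset n \<pi> x y" and s': "s \<in> Gset n \<pi> x' y'"
    and \<pi>: "\<pi> \<in> permutations_of_set {0..<n}"
  shows "(x' = x \<and> y' = y) \<or> (x' = y \<and> y' = x)"
proof (rule ccontr)
  assume nc: "\<not> ?thesis"
  obtain z where z: "z \<in> C" "z \<noteq> x" "z \<noteq> y" "z = x' \<or> z = y'"
    using nc x' y' xy' by blast
  obtain w where w: "w \<in> C" "w \<noteq> x'" "w \<noteq> y'" "w = x \<or> w = y"
    using nc x y xy by blast
  obtain e where e: "e \<in> set (dropWhile (\<lambda>j. x j = y j) \<pi>)" "e \<in> set (takeWhile (\<lambda>j. x' j = y' j) \<pi>)"
    using aux_cross[OF tc x y xy x' y' s s' \<pi> z] by blast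
  obtain e' where e': "e' \<in> set (dropWhile (\<lambda>j. x' j = y' j) \<pi>)" "e' \<in> set (takeWhile (\<lambda>j. x j = y j) \<pi>)"
    using aux_cross[OF tc x' y' xy' x y s' s \<pi> w] by blast
  have d: "distinct (takeWhile (\<lambda>j. x j = y j) \<pi> @ dropWhile (\<lambda>j. x j = y j) \<pi>)"
    using \<pi> by (simp add: permutations_of_setD)
  show False
    by (rule list_cross[OF d _ e'(2) e(1) e(2) e'(1)]) simp
qed

lemma distinct_takeWhile_perm:
  assumes "\<pi> \<in> permutations_of_set S"
  shows "distinct (takeWhile P \<pi>)"
proof -
  have "distinct (takeWhile P \<pi> @ dropWhile P \<pi>)" using assms by (simp add: permutations_of_setD)
  then show ?thesis by simp
qed

lemma card_Gset:
  assumes x: "x \<in> ternary_strings n" and y: "y \<in> ternary_strings n"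
    and \<pi>: "\<pi> \<in> permutations_of_set {0..<n}"
  shows "real (card (Gset n \<pi> x y)) = 2 ^ agr n x y * ((3/2) ^ length (takeWhile (\<lambda>j. x j = y j) \<pi>) - 1)"
proof -
  define P where "P = (\<lambda>j. x j = y j)"
  define F where "F = set (takeWhile P \<pi>)"
  define f where "f = length (takeWhile P \<pi>)"
  define m where "m = agr n x y"
  define Q where "Q = {i. i < n \<and> P i}"
  have setpi: "set \<pi> = {0..<n}" using \<pi> by (simp add: permutations_of_setD)
  have FQ: "F \<subseteq> Q" unfolding F_def Q_def using setpi
    by (auto dest: set_takeWhileD)
  have cardF: "card F = f" unfolding F_def f_def
    using distinct_takeWhile_perm[OF \<pi>] by (simp add: distinct_card)
  have cardQ: "card Q = m" unfolding Q_def m_def agr_def P_def by simp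
  have fQ: "finite Q" unfolding Q_def by simp
  have fm: "f \<le> m" using card_mono[OF fQ FQ] cardF cardQ by simp
  define A1 where "A1 = (\<lambda>i. if \<not> P i then {3 - x i - y i} else if i \<in> F then T3 else T3 - {x i})"
  define A2 where "A2 = (\<lambda>i. if \<not> P i then {3 - x i - y i} else T3 - {x i})"
  have vx: "\<And>i. i < n \<Longrightarrow> x i \<in> T3" and vy: "\<And>i. i < n \<Longrightarrow> y i \<in> T3"
    using x y ternary_memD by auto
  have th: "\<And>i. i < n \<Longrightarrow> \<not> P i \<Longrightarrow> 3 - x i - y i \<noteq> x i \<and> 3 - x i - y i \<in> T3"
  proof -
    fix i assume a: "i < n" "\<not> P i"
    then have "x i \<noteq> y i" unfolding P_def by simp
    then show "3 - x i - y i \<noteq> x i \<and> 3 - x i - y i \<in> T3"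
      using third_ne[of "x i" "y i"] vx[OF a(1)] vy[OF a(1)] by blast
  qed
  have eq: "Gset n \<pi> x y = PiE {0..<n} A1 - PiE {0..<n} A2"
  proof
    show "Gset n \<pi> x y \<subseteq> PiE {0..<n} A1 - PiE {0..<n} A2"
    proof
      fix s assume s: "s \<in> Gset n \<pi> x y"
      have st: "s \<in> ternary_strings n" and sD: "\<forall>i<n. x i \<noteq> y i \<longrightarrow> s i = 3 - x i - y i"
        and sE: "\<exists>i<n. s i = x i" and sF: "\<forall>i<n. s i = x i \<longrightarrow> i \<in> F"
        using s unfolding Gset_def F_def P_def by auto
      have "s \<in> PiE {0..<n} A1"
      proof -
        have "\<forall>i\<in>{0..<n}. s i \<in> A1 i"
        proof
          fix i assume i: "i \<in> {0..<n}"
          then have "s i \<in> T3" using st ternary_memD by auto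
          then show "s i \<in> A1 i" using i sD sF unfolding A1_def P_def by auto
        qed
        moreover have "s \<in> extensional {0..<n}" using st unfolding ternary_strings_def by (simp add: PiE_iff)
        ultimately show ?thesis by (simp add: PiE_iff)
      qed
      moreover have "s \<notin> PiE {0..<n} A2"
      proof
        assume "s \<in> PiE {0..<n} A2"
        then have a: "\<forall>i<n. s i \<in> A2 i" by (auto simp: PiE_iff)
        obtain i where i: "i < n" "s i = x i" using sE by blast
        show False
        proof (cases "P i")
          case True then show False using a i unfolding A2_def by auto
        next
          case False
          have "s i \<in> A2 i" using a i(1) by blast
          then have "s i = 3 - x i - y i" using False unfolding A2_def by simp
          then show False using th[OF i(1) False] i(2) by simp
        qed
      qed
      ultimately show "s \<in> PiE {0..<n} A1 - PiE {0..<n} A2" by simp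
    qed
  next
    show "PiE {0..<n} A1 - PiE {0..<n} A2 \<subseteq> Gset n \<pi> x y"
    proof
      fix s assume s: "s \<in> PiE {0..<n} A1 - PiE {0..<n} A2"
      have a1: "\<forall>i<n. s i \<in> A1 i" and ex: "s \<in> extensional {0..<n}" using s by (auto simp: PiE_iff)
      have "\<not> (\<forall>i\<in>{0..<n}. s i \<in> A2 i)" using s ex by (auto simp: PiE_iff)
      then obtain i0 where i0: "i0 < n" "s i0 \<notin> A2 i0" by auto
      have st: "s \<in> ternary_strings n"
      proof -
        have "\<forall>i\<in>{0..<n}. s i \<in> T3"
        proof
          fix i assume i: "i \<in> {0..<n}"
          show "s i \<in> T3" using a1 i th[of i] unfolding A1_def by (auto split: if_splits)
        qed
        then show ?thesis unfolding ternary_strings_def using ex by (simp add: PiE_iff)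
      qed
      have c1: "\<forall>i<n. x i \<noteq> y i \<longrightarrow> s i = 3 - x i - y i" using a1 unfolding A1_def P_def by auto
      have Pi0: "P i0" using i0 a1 unfolding A1_def A2_def by (auto split: if_splits)
      have c2: "\<exists>i<n. s i = x i"
      proof -
        have "i0 \<in> F" using i0 a1 Pi0 unfolding A1_def A2_def by (auto split: if_splits)
        then have "s i0 \<in> T3" using i0 a1 Pi0 unfolding A1_def by auto
        then have "s i0 = x i0" using i0 Pi0 unfolding A2_def by auto
        then show ?thesis using i0 by blast
      qed
      have c3: "\<forall>i<n. s i = x i \<longrightarrow> i \<in> set (takeWhile (\<lambda>j. x j = y j) \<pi>)"
      proof (intro allI impI)
        fix i assume i: "i < n" "s i = x i"
        have "P i"
        proof (rule ccontr)
          assume "\<not> P i"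
          then show False using a1 i th[of i] unfolding A1_def by auto
        qed
        then show "i \<in> set (takeWhile (\<lambda>j. x j = y j) \<pi>)"
          using a1 i unfolding A1_def F_def P_def by (auto split: if_splits)
      qed
      show "s \<in> Gset n \<pi> x y" unfolding Gset_def using st c1 c2 c3 by blast
    qed
  qed
  have sub: "PiE {0..<n} A2 \<subseteq> PiE {0..<n} A1"
    by (rule PiE_mono) (auto simp: A1_def A2_def)
  have cA1: "\<And>i. i < n \<Longrightarrow> card (A1 i) = (if P i then (if i \<in> F then 3 else 2) else 1)"
    using vx unfolding A1_def by auto
  have cA2: "\<And>i. i < n \<Longrightarrow> card (A2 i) = (if P i then 2 else 1)"
    using vx unfolding A2_def by auto
  have p1: "card (PiE {0..<n} A1) = 3 ^ f * 2 ^ (m - f)"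
  proof -
    have "card (PiE {0..<n} A1) = (\<Prod>i\<in>{0..<n}. if P i then (if i \<in> F then 3 else 2) else 1)"
      by (simp add: card_PiE cA1)
    also have "\<dots> = (\<Prod>i\<in>Q. if i \<in> F then 3 else 2)"
      by (simp add: prod.If_cases Q_def Int_def)
    also have "\<dots> = 3 ^ card (Q \<inter> F) * 2 ^ card (Q - F)"
      using fQ by (simp add: prod.If_cases Int_def set_diff_eq)
    also have "Q \<inter> F = F" using FQ by auto
    also have "card (Q - F) = m - f" using card_Diff_subset[OF finite_subset[OF FQ fQ] FQ] cardF cardQ by simp
    finally show ?thesis using cardF by simp
  qed
  have p2: "card (PiE {0..<n} A2) = 2 ^ m"
  proof -
    have "card (PiE {0..<n} A2) = (\<Prod>i\<in>{0..<n}. if P i then 2 else 1)"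
      by (simp add: card_PiE cA2)
    also have "\<dots> = 2 ^ card Q"
      by (simp add: prod.If_cases Q_def Int_def)
    finally show ?thesis using cardQ by simp
  qed
  have fin1: "finite (PiE {0..<n} A1)" by (rule finite_PiE) (auto simp: A1_def)
  have fin2: "finite (PiE {0..<n} A2)" by (rule finite_PiE) (auto simp: A2_def)
  have "card (Gset n \<pi> x y) = 3 ^ f * 2 ^ (m - f) - 2 ^ m"
    using eq card_Diff_subset[OF fin2 sub] p1 p2 by simp
  moreover have "(2::nat) ^ m \<le> 3 ^ f * 2 ^ (m - f)"
    using card_mono[OF fin1 sub] p1 p2 by simp
  ultimately have "real (card (Gset n \<pi> x y)) = 3 ^ f * 2 ^ (m - f) - 2 ^ m"
    by (simp add: of_nat_diff)
  also have "\<dots> = 2 ^ m * ((3/2) ^ f - 1)"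
  proof -
    have "(2::real) ^ m = 2 ^ (m - f) * 2 ^ f" using fm by (simp add: power_add[symmetric])
    then show ?thesis by (simp add: field_simps power_divide)
  qed
  finally show ?thesis unfolding m_def f_def P_def .
qed


lemma charge_pointwise:
  assumes tc: "trifferent_code n C" and \<pi>: "\<pi> \<in> permutations_of_set {0..<n}"
  shows "card {p \<in> Sigma C (\<lambda>x. C - {x}). s \<in> Gset n \<pi> (fst p) (snd p)} \<le>
         (if surv n C s = {} then 2 else 0)"
proof (cases "{p \<in> Sigma C (\<lambda>x. C - {x}). s \<in> Gset n \<pi> (fst p) (snd p)} = {}")
  case True show ?thesis unfolding True by simp
next
  case False
  then obtain x y where x: "x \<in> C" and y: "y \<in> C" and xy: "x \<noteq> y" and s: "s \<in> Gset n \<pi> x y"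
    by auto
  have e: "surv n C s = {}" by (rule G_surv_empty[OF tc x y xy s])
  have "{p \<in> Sigma C (\<lambda>x. C - {x}). s \<in> Gset n \<pi> (fst p) (snd p)} \<subseteq> {(x,y),(y,x)}"
  proof
    fix p assume p: "p \<in> {p \<in> Sigma C (\<lambda>x. C - {x}). s \<in> Gset n \<pi> (fst p) (snd p)}"
    obtain x' y' where pe: "p = (x', y')" by (cases p)
    have x': "x' \<in> C" and y': "y' \<in> C" and xy': "x' \<noteq> y'" and s': "s \<in> Gset n \<pi> x' y'"
      using p pe by auto
    show "p \<in> {(x,y),(y,x)}" using pair_unique[OF tc x y xy x' y' xy' s s' \<pi>] pe by auto
  qed
  then have "card {p \<in> Sigma C (\<lambda>x. C - {x}). s \<in> Gset n \<pi> (fst p) (snd p)} \<le> card {(x,y),(y,x)}"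
    by (rule card_mono[rotated]) simp
  also have "\<dots> \<le> 2" using xy by simp
  finally show ?thesis using e by simp
qed

lemma Gset_sub: "Gset n \<pi> x y \<subseteq> ternary_strings n"
  unfolding Gset_def by auto

lemma charge_sum:
  assumes tc: "trifferent_code n C" and \<pi>: "\<pi> \<in> permutations_of_set {0..<n}"
  shows "(\<Sum>x\<in>C. \<Sum>y\<in>C-{x}. card (Gset n \<pi> x y)) \<le> 2 * card {s\<in>ternary_strings n. surv n C s = {}}"
proof -
  have fC: "finite C" by (rule tc_finite[OF tc])
  have fS: "finite (Sigma C (\<lambda>x. C - {x}))" using fC by simp
  have "(\<Sum>x\<in>C. \<Sum>y\<in>C-{x}. card (Gset n \<pi> x y)) =
        (\<Sum>p\<in>Sigma C (\<lambda>x. C - {x}). card (Gset n \<pi> (fst p) (snd p)))"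
    using fC by (simp add: sum.Sigma split_def)
  also have "\<dots> = (\<Sum>p\<in>Sigma C (\<lambda>x. C - {x}). card {s\<in>ternary_strings n. s \<in> Gset n \<pi> (fst p) (snd p)})"
  proof (rule sum.cong[OF refl])
    fix p
    have "{s\<in>ternary_strings n. s \<in> Gset n \<pi> (fst p) (snd p)} = Gset n \<pi> (fst p) (snd p)"
      using Gset_sub by blast
    then show "card (Gset n \<pi> (fst p) (snd p)) = card {s\<in>ternary_strings n. s \<in> Gset n \<pi> (fst p) (snd p)}"
      by simp
  qed
  also have "\<dots> = (\<Sum>s\<in>ternary_strings n. card {p \<in> Sigma C (\<lambda>x. C - {x}). s \<in> Gset n \<pi> (fst p) (snd p)})"
    by (rule sum_card_swap[OF fS finite_ternary])
  also have "\<dots> \<le> (\<Sum>s\<in>ternary_strings n. if surv n C s = {} then 2 else 0)"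
    by (rule sum_mono) (rule charge_pointwise[OF tc \<pi>])
  also have "\<dots> = 2 * (\<Sum>s\<in>ternary_strings n. if surv n C s = {} then 1 else 0)"
    by (subst sum_distrib_left) (rule sum.cong; simp)
  also have "\<dots> = 2 * card {s\<in>ternary_strings n. surv n C s = {}}"
    using card_filter_sum[OF finite_ternary, of n "\<lambda>s. surv n C s = {}"] by simp
  finally show ?thesis .
qed

lemma perm_sum_pair:
  assumes x: "x \<in> ternary_strings n" and y: "y \<in> ternary_strings n"
  shows "(\<Sum>\<pi>\<in>permutations_of_set {0..<n}. real (card (Gset n \<pi> x y))) =
         fact n * (2 ^ agr n x y * Hf (agr n x y) (dst n x y))"
proof -
  have c1: "card {i\<in>{0..<n}. x i = y i} = agr n x y"
  proof -
    have "{i\<in>{0..<n}. x i = y i} = {i. i < n \<and> x i = y i}" by force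
    then show ?thesis unfolding agr_def by simp
  qed
  have c2: "card {i\<in>{0..<n}. \<not> x i = y i} = dst n x y"
  proof -
    have "{i\<in>{0..<n}. \<not> x i = y i} = {i. i < n \<and> x i \<noteq> y i}" by force
    then show ?thesis unfolding dst_def by simp
  qed
  have "(\<Sum>\<pi>\<in>permutations_of_set {0..<n}. real (card (Gset n \<pi> x y))) =
        (\<Sum>\<pi>\<in>permutations_of_set {0..<n}. 2 ^ agr n x y * ((3/2) ^ length (takeWhile (\<lambda>j. x j = y j) \<pi>) - 1))"
    by (rule sum.cong[OF refl]) (rule card_Gset[OF x y])
  also have "\<dots> = 2 ^ agr n x y * ((\<Sum>\<pi>\<in>permutations_of_set {0..<n}. (3/2) ^ length (takeWhile (\<lambda>j. x j = y j) \<pi>))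
                   - real (card (permutations_of_set {0..<n})))"
    by (simp add: sum_distrib_left[symmetric] sum_subtractf)
  also have "\<dots> = 2 ^ agr n x y * (fact n * (1 + Hf (agr n x y) (dst n x y)) - fact n)"
    using perm_sum[of "{0..<n}" "\<lambda>j. x j = y j"] c1 c2 by simp
  also have "\<dots> = fact n * (2 ^ agr n x y * Hf (agr n x y) (dst n x y))"
    by (simp add: algebra_simps)
  finally show ?thesis .
qed

lemma charge_total:
  assumes tc: "trifferent_code n C"
  shows "(\<Sum>x\<in>C. \<Sum>y\<in>C-{x}. 2 ^ agr n x y * Hf (agr n x y) (dst n x y)) \<le>
         2 * real (card {s\<in>ternary_strings n. surv n C s = {}})"
proof -
  let ?a0 = "real (card {s\<in>ternary_strings n. surv n C s = {}})"
  let ?P = "permutations_of_set {0..<n}"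
  have fC: "finite C" by (rule tc_finite[OF tc])
  have "fact n * (\<Sum>x\<in>C. \<Sum>y\<in>C-{x}. 2 ^ agr n x y * Hf (agr n x y) (dst n x y)) =
        (\<Sum>x\<in>C. \<Sum>y\<in>C-{x}. fact n * (2 ^ agr n x y * Hf (agr n x y) (dst n x y)))"
    by (simp add: sum_distrib_left)
  also have "\<dots> = (\<Sum>x\<in>C. \<Sum>y\<in>C-{x}. \<Sum>\<pi>\<in>?P. real (card (Gset n \<pi> x y)))"
    by (intro sum.cong refl, rule perm_sum_pair[symmetric]) (use tc_sub[OF tc] in auto)
  also have "\<dots> = (\<Sum>\<pi>\<in>?P. \<Sum>x\<in>C. \<Sum>y\<in>C-{x}. real (card (Gset n \<pi> x y)))"
    by (simp add: sum.swap[of _ ?P])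
  also have "\<dots> \<le> (\<Sum>\<pi>\<in>?P. 2 * ?a0)"
  proof (rule sum_mono)
    fix \<pi> assume \<pi>: "\<pi> \<in> ?P"
    have "(\<Sum>x\<in>C. \<Sum>y\<in>C-{x}. card (Gset n \<pi> x y)) \<le> 2 * card {s\<in>ternary_strings n. surv n C s = {}}"
      by (rule charge_sum[OF tc \<pi>])
    then have "real (\<Sum>x\<in>C. \<Sum>y\<in>C-{x}. card (Gset n \<pi> x y)) \<le> real (2 * card {s\<in>ternary_strings n. surv n C s = {}})"
      by (simp only: of_nat_le_iff)
    then show "(\<Sum>x\<in>C. \<Sum>y\<in>C-{x}. real (card (Gset n \<pi> x y))) \<le> 2 * ?a0"
      by simp
  qed
  also have "\<dots> = fact n * (2 * ?a0)" by simp
  finally show ?thesis by simp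
qed

lemma main_ineq:
  assumes tc: "trifferent_code n C"
  shows "2 * real (card C) * 2 ^ n \<le> 2 * 3 ^ n +
     (\<Sum>x\<in>C. \<Sum>y\<in>C-{x}. 2 ^ agr n x y * (1 - Hf (agr n x y) (dst n x y)))"
proof -
  let ?a0 = "card {s\<in>ternary_strings n. surv n C s = {}}"
  have fC: "finite C" by (rule tc_finite[OF tc])
  have pt: "\<And>s. s \<in> ternary_strings n \<Longrightarrow>
      2 * card (surv n C s) + 2 * (if surv n C s = {} then 1 else 0) =
      2 + card (surv n C s) * (card (surv n C s) - 1)"
  proof -
    fix s assume s: "s \<in> ternary_strings n"
    have le: "card (surv n C s) \<le> 2" by (rule surv_le2[OF tc s])
    have fin: "finite (surv n C s)" using fC unfolding surv_def by simp
    have "card (surv n C s) = 0 \<or> card (surv n C s) = 1 \<or> card (surv n C s) = 2" using le by auto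
    then show "2 * card (surv n C s) + 2 * (if surv n C s = {} then 1 else 0) =
      2 + card (surv n C s) * (card (surv n C s) - 1)"
      using fin by auto
  qed
  have "(\<Sum>s\<in>ternary_strings n. 2 * card (surv n C s) + 2 * (if surv n C s = {} then 1 else 0)) =
        (\<Sum>s\<in>ternary_strings n. 2 + card (surv n C s) * (card (surv n C s) - 1))"
    by (rule sum.cong[OF refl]) (rule pt)
  moreover have "(\<Sum>s\<in>ternary_strings n. 2 * card (surv n C s) + 2 * (if surv n C s = {} then 1 else 0)) =
      2 * (\<Sum>s\<in>ternary_strings n. card (surv n C s)) + 2 * (\<Sum>s\<in>ternary_strings n. if surv n C s = {} then 1 else 0)"
    by (simp only: sum.distrib sum_distrib_left)
  moreover have "(\<Sum>s\<in>ternary_strings n. 2 + card (surv n C s) * (card (surv n C s) - 1)) =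
      (\<Sum>s\<in>ternary_strings n. 2) + (\<Sum>s\<in>ternary_strings n. card (surv n C s) * (card (surv n C s) - 1))"
    by (rule sum.distrib)
  moreover have "(\<Sum>s\<in>ternary_strings n. (2::nat)) = 2 * card (ternary_strings n)" by simp
  ultimately have "2 * (\<Sum>s\<in>ternary_strings n. card (surv n C s)) + 2 * (\<Sum>s\<in>ternary_strings n. if surv n C s = {} then 1 else 0) =
        2 * card (ternary_strings n) + (\<Sum>s\<in>ternary_strings n. card (surv n C s) * (card (surv n C s) - 1))"
    by simp
  then have nat_id: "2 * (card C * 2 ^ n) + 2 * ?a0 = 2 * 3 ^ n + (\<Sum>x\<in>C. \<Sum>y\<in>C-{x}. 2 ^ agr n x y)"
    using sum_surv[OF tc] sum_pairs[OF tc] card_ternary[of n]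
      card_filter_sum[OF finite_ternary, of n "\<lambda>s. surv n C s = {}"] by simp
  then have "real (2 * (card C * 2 ^ n) + 2 * ?a0) = real (2 * 3 ^ n + (\<Sum>x\<in>C. \<Sum>y\<in>C-{x}. 2 ^ agr n x y))"
    by (rule arg_cong)
  then have real_id: "2 * (real (card C) * 2 ^ n) + 2 * real ?a0 = 2 * 3 ^ n + (\<Sum>x\<in>C. \<Sum>y\<in>C-{x}. (2::real) ^ agr n x y)"
    by simp
  have ch: "(\<Sum>x\<in>C. \<Sum>y\<in>C-{x}. 2 ^ agr n x y * Hf (agr n x y) (dst n x y)) \<le> 2 * real ?a0"
    by (rule charge_total[OF tc])
  have "(\<Sum>x\<in>C. \<Sum>y\<in>C-{x}. 2 ^ agr n x y * (1 - Hf (agr n x y) (dst n x y))) =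
        (\<Sum>x\<in>C. \<Sum>y\<in>C-{x}. (2::real) ^ agr n x y) - (\<Sum>x\<in>C. \<Sum>y\<in>C-{x}. 2 ^ agr n x y * Hf (agr n x y) (dst n x y))"
    by (simp add: algebra_simps sum_subtractf)
  then show ?thesis using real_id ch by linarith
qed

lemma Hf_nonneg: "Hf m d \<ge> 0"
  by (induction m) auto

lemma Hf_low: "m \<le> d + 3 \<Longrightarrow> Hf m d \<ge> (real m - 1) / (2 * real d - real m + 5)"
proof (induction m)
  case 0
  then show ?case by (simp add: divide_nonpos_pos)
next
  case (Suc m)
  have den: "2 * real d - real m + 5 > 0" and den2: "2 * real d - real m + 4 > 0" using Suc.prems by auto
  have IH: "Hf m d \<ge> (real m - 1) / (2 * real d - real m + 5)" using Suc by simp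
  have "1/3 + Hf m d \<ge> 1/3 + (real m - 1) / (2 * real d - real m + 5)" using IH by simp
  also have "1/3 + (real m - 1) / (2 * real d - real m + 5) = 2 * (real m + 1 + real d) / (3 * (2 * real d - real m + 5))"
    using den by (simp add: field_simps)
  finally have a: "1/3 + Hf m d \<ge> 2 * (real m + 1 + real d) / (3 * (2 * real d - real m + 5))" .
  have pos: "3/2 * real (Suc m) / real (Suc m + d) \<ge> 0" by simp
  have "Hf (Suc m) d = 3/2 * real (Suc m) / real (Suc m + d) * (1/3 + Hf m d)" by simp
  also have "\<dots> \<ge> 3/2 * real (Suc m) / real (Suc m + d) * (2 * (real m + 1 + real d) / (3 * (2 * real d - real m + 5)))"
    using mult_left_mono[OF a pos] by simp
  finally have b: "Hf (Suc m) d \<ge> 3/2 * real (Suc m) / real (Suc m + d) * (2 * (real m + 1 + real d) / (3 * (2 * real d - real m + 5)))" .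
  have c: "3/2 * real (Suc m) / real (Suc m + d) * (2 * (real m + 1 + real d) / (3 * (2 * real d - real m + 5)))
        = (real m + 1) / (2 * real d - real m + 5)"
  proof -
    define A where "A = real m + 1 + real d"
    define B where "B = 2 * real d - real m + 5"
    have A0: "A \<noteq> 0" unfolding A_def by simp
    have B0: "B \<noteq> 0" using den unfolding B_def by simp
    have S: "real (Suc m + d) = A" unfolding A_def by simp
    have S1: "real (Suc m) = real m + 1" by simp
    have "3/2 * (real m + 1) / A * (2 * A / (3 * B)) = (real m + 1) / B" using A0 B0 by (simp add: field_simps)
    then show ?thesis unfolding S S1 A_def[symmetric] B_def[symmetric] .
  qed
  have d: "(real m + 1) / (2 * real d - real m + 5) \<ge> real m / (2 * real d - real m + 4)"
  proof -
    have "real m * (2 * real d - real m + 5) \<le> (real m + 1) * (2 * real d - real m + 4)"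
      using Suc.prems by (simp add: algebra_simps)
    then show ?thesis using den den2 by (simp add: field_simps)
  qed
  have e: "(real (Suc m) - 1) / (2 * real d - real (Suc m) + 5) = real m / (2 * real d - real m + 4)"
    by (simp add: algebra_simps)
  show ?case using b c d e by linarith
qed

lemma Hf_ge1: "d + 3 \<le> m \<Longrightarrow> Hf m d \<ge> 1"
proof (induction m rule: dec_induct)
  case base
  have "Hf (d + 3) d \<ge> (real (d + 3) - 1) / (2 * real d - real (d + 3) + 5)"
    by (rule Hf_low) simp
  also have "(real (d + 3) - 1) / (2 * real d - real (d + 3) + 5) = 1" by simp
  finally show ?case .
next
  case (step m)
  have "Hf (Suc m) d = 3/2 * real (Suc m) / real (Suc m + d) * (1/3 + Hf m d)" by simp
  moreover have "3/2 * real (Suc m) / real (Suc m + d) * (1/3 + Hf m d) \<ge> 3/2 * real (Suc m) / real (Suc m + d) * (4/3)"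
    using step.IH by (intro mult_left_mono) auto
  moreover have "3/2 * real (Suc m) / real (Suc m + d) * (4/3) \<ge> 1"
    using step.hyps by (simp add: field_simps)
  ultimately show ?case by linarith
qed

lemma Hf_near:
  assumes "d < m + 2 * t"
  shows "1 - Hf m d \<le> 8 * (real t + 1) / (real m + real d + 1)"
proof (cases "d + 3 \<le> m")
  case True
  then have "1 - Hf m d \<le> 0" using Hf_ge1 by simp
  also have "0 \<le> 8 * (real t + 1) / (real m + real d + 1)" by simp
  finally show ?thesis .
next
  case False
  then have mle: "m \<le> d + 2" by simp
  have den: "2 * real d - real m + 5 > 0" using mle by simp
  have "1 - Hf m d \<le> 1 - (real m - 1) / (2 * real d - real m + 5)"
    using Hf_low[of m d] mle by simp
  also have "\<dots> = 2 * (real d - real m + 3) / (2 * real d - real m + 5)"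
    using den by (simp add: field_simps)
  also have "\<dots> \<le> 8 * (real t + 1) / (real m + real d + 1)"
  proof -
    have n1: "2 * (2 * (real d - real m + 3)) \<le> 8 * (real t + 1)" using assms by simp
    have d1: "2 * (2 * real d - real m + 5) \<ge> real m + real d + 1" using mle by simp
    have "2 * (real d - real m + 3) / (2 * real d - real m + 5) =
          (2 * (2 * (real d - real m + 3))) / (2 * (2 * real d - real m + 5))"
      by (rule mult_divide_mult_cancel_left[symmetric]) simp
    also have "\<dots> \<le> 8 * (real t + 1) / (real m + real d + 1)"
      by (rule frac_le) (use n1 d1 in auto)
    finally show ?thesis .
  qed
  finally show ?thesis .
qed

lemma opt_sum1:
  assumes "a \<in> T3" "b \<in> T3"
  shows "(\<Sum>r\<in>insert 3 (T3 - {a}). (if r = 3 then w else 1/2) * (if r = 3 \<or> b = a \<or> b = r then 1 else 0))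
         = (if b = a then 1 + w else w + (1/2::real))"
  using assms by (auto simp: insert_Diff_if)

lemma opt_sum2:
  assumes "a \<in> T3"
  shows "(\<Sum>r\<in>insert 3 (T3 - {a}). (if r = 3 then 3/2 * w else (1/2::real))) = 1 + 3/2 * w"
  using assms by (auto simp: insert_Diff_if)

lemma prod_indicator:
  "finite I \<Longrightarrow> (\<Prod>i\<in>I. if P i then 1 else (0::real)) = (if \<forall>i\<in>I. P i then 1 else 0)"
  by (induction I rule: finite_induct) auto

lemma pow_card_prod:
  "finite I \<Longrightarrow> (c::real) ^ card {i\<in>I. P i} = (\<Prod>i\<in>I. if P i then c else 1)"
  by (simp add: prod.If_cases Int_def)

lemma tilted:
  fixes w :: real
  assumes tc: "trifferent_code n C" and x: "x \<in> C" and w: "w \<ge> 0"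
  shows "(\<Sum>z\<in>C. (w + 1/2) ^ dst n x z * (1 + w) ^ agr n x z) \<le> 2 * (1 + 3/2 * w) ^ n"
proof -
  define R where "R = PiE {0..<n} (\<lambda>i. insert 3 (T3 - {x i}))"
  define om where "om = (\<lambda>\<rho>. \<Prod>i\<in>{0..<n}. if \<rho> i = (3::nat) then w else (1/2::real))"
  define W where "W = (\<lambda>\<rho>. {z\<in>C. \<forall>i<n. \<rho> i \<noteq> 3 \<longrightarrow> z i = x i \<or> z i = \<rho> i})"
  define K where "K = (\<lambda>\<rho>. {i\<in>{0..<n}. \<rho> i = (3::nat)})"
  have fC: "finite C" by (rule tc_finite[OF tc])
  have fR: "finite R" unfolding R_def by (rule finite_PiE) auto
  have xt: "x \<in> ternary_strings n" using tc_sub[OF tc x] .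
  have xv: "\<And>i. i < n \<Longrightarrow> x i \<in> T3" using ternary_memD[OF xt] .
  have om_nn: "\<And>\<rho>. om \<rho> \<ge> 0" unfolding om_def using w by (intro prod_nonneg) auto
  \<comment> \<open>(a) Elias bound for each restriction\<close>
  have a: "\<And>\<rho>. \<rho> \<in> R \<Longrightarrow> real (card (W \<rho>)) \<le> 2 * (3/2) ^ card (K \<rho>)"
  proof -
    fix \<rho> assume \<rho>: "\<rho> \<in> R"
    have fK: "finite (K \<rho>)" unfolding K_def by simp
    have fW: "finite (W \<rho>)" unfolding W_def using fC by simp
    have vals: "\<forall>z\<in>W \<rho>. \<forall>i\<in>K \<rho>. z i \<in> T3"
    proof (intro ballI)
      fix z i assume "z \<in> W \<rho>" "i \<in> K \<rho>"
      then have zc: "z \<in> C" and "i < n" unfolding W_def K_def by auto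
      then show "z i \<in> T3" using ternary_memD[OF tc_sub[OF tc zc]] by blast
    qed
    have trif: "\<forall>x1\<in>W \<rho>. \<forall>x2\<in>W \<rho>. \<forall>x3\<in>W \<rho>. x1 \<noteq> x2 \<and> x2 \<noteq> x3 \<and> x1 \<noteq> x3 \<longrightarrow>
                 (\<exists>i\<in>K \<rho>. x1 i \<noteq> x2 i \<and> x2 i \<noteq> x3 i \<and> x1 i \<noteq> x3 i)"
    proof (intro ballI impI)
      fix x1 x2 x3 assume xs: "x1 \<in> W \<rho>" "x2 \<in> W \<rho>" "x3 \<in> W \<rho>" and d: "x1 \<noteq> x2 \<and> x2 \<noteq> x3 \<and> x1 \<noteq> x3"
      have c: "x1 \<in> C" "x2 \<in> C" "x3 \<in> C" using xs unfolding W_def by auto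
      obtain i where i: "i < n" "x1 i \<noteq> x2 i" "x2 i \<noteq> x3 i" "x1 i \<noteq> x3 i"
        using tc_trif[OF tc c] d by blast
      have "\<rho> i = 3"
      proof (rule ccontr)
        assume "\<rho> i \<noteq> 3"
        then have "x1 i = x i \<or> x1 i = \<rho> i" "x2 i = x i \<or> x2 i = \<rho> i" "x3 i = x i \<or> x3 i = \<rho> i"
          using xs i(1) unfolding W_def by auto
        then show False using i by auto
      qed
      then show "\<exists>i\<in>K \<rho>. x1 i \<noteq> x2 i \<and> x2 i \<noteq> x3 i \<and> x1 i \<noteq> x3 i"
        using i unfolding K_def by auto
    qed
    have "card (W \<rho>) * 2 ^ card (K \<rho>) \<le> 2 * 3 ^ card (K \<rho>)"
      by (rule elias_gen[OF fK fW vals trif])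
    then have "real (card (W \<rho>) * 2 ^ card (K \<rho>)) \<le> real (2 * 3 ^ card (K \<rho>))"
      by (simp only: of_nat_le_iff)
    then have "real (card (W \<rho>)) * 2 ^ card (K \<rho>) \<le> 2 * 3 ^ card (K \<rho>)"
      by simp
    then have "real (card (W \<rho>)) \<le> 2 * 3 ^ card (K \<rho>) / 2 ^ card (K \<rho>)"
      by (simp add: field_simps)
    also have "\<dots> = 2 * (3/2) ^ card (K \<rho>)" by (simp add: power_divide)
    finally show "real (card (W \<rho>)) \<le> 2 * (3/2) ^ card (K \<rho>)" .
  qed
  \<comment> \<open>(b) the left-hand side as a weighted count\<close>
  have b: "(\<Sum>\<rho>\<in>R. om \<rho> * real (card (W \<rho>))) = (\<Sum>z\<in>C. (w + 1/2) ^ dst n x z * (1 + w) ^ agr n x z)"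
  proof -
    have "(\<Sum>\<rho>\<in>R. om \<rho> * real (card (W \<rho>))) = (\<Sum>\<rho>\<in>R. \<Sum>z\<in>C. om \<rho> * (if z \<in> W \<rho> then 1 else 0))"
    proof (rule sum.cong[OF refl])
      fix \<rho>
      have "real (card (W \<rho>)) = (\<Sum>z\<in>C. if z \<in> W \<rho> then 1 else 0)"
      proof -
        have "W \<rho> = {z\<in>C. z \<in> W \<rho>}" unfolding W_def by auto
        then have "card (W \<rho>) = (\<Sum>z\<in>C. if z \<in> W \<rho> then 1 else 0)"
          using card_filter_sum[OF fC, of "\<lambda>z. z \<in> W \<rho>"] by simp
        then have "real (card (W \<rho>)) = (\<Sum>z\<in>C. real (if z \<in> W \<rho> then 1 else 0))" by simp
        also have "\<dots> = (\<Sum>z\<in>C. if z \<in> W \<rho> then 1 else 0)" by (rule sum.cong) auto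
        finally show ?thesis .
      qed
      then show "om \<rho> * real (card (W \<rho>)) = (\<Sum>z\<in>C. om \<rho> * (if z \<in> W \<rho> then 1 else 0))"
        by (simp add: sum_distrib_left)
    qed
    also have "\<dots> = (\<Sum>z\<in>C. \<Sum>\<rho>\<in>R. om \<rho> * (if z \<in> W \<rho> then 1 else 0))"
      by (rule sum.swap)
    also have "\<dots> = (\<Sum>z\<in>C. (w + 1/2) ^ dst n x z * (1 + w) ^ agr n x z)"
    proof (rule sum.cong[OF refl])
      fix z assume z: "z \<in> C"
      have zv: "\<And>i. i < n \<Longrightarrow> z i \<in> T3" using ternary_memD[OF tc_sub[OF tc z]] .
      define g where "g = (\<lambda>i r. (if r = (3::nat) then w else (1/2::real)) * (if r = 3 \<or> z i = x i \<or> z i = r then 1 else 0))"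
      have "\<And>\<rho>. \<rho> \<in> R \<Longrightarrow> om \<rho> * (if z \<in> W \<rho> then 1 else 0) = (\<Prod>i\<in>{0..<n}. g i (\<rho> i))"
      proof -
        fix \<rho> assume "\<rho> \<in> R"
        have "(if z \<in> W \<rho> then 1 else (0::real)) = (\<Prod>i\<in>{0..<n}. if \<rho> i = 3 \<or> z i = x i \<or> z i = \<rho> i then 1 else 0)"
        proof -
          have "z \<in> W \<rho> \<longleftrightarrow> (\<forall>i\<in>{0..<n}. \<rho> i = 3 \<or> z i = x i \<or> z i = \<rho> i)"
            unfolding W_def using z by auto
          then show ?thesis by (simp add: prod_indicator)
        qed
        then show "om \<rho> * (if z \<in> W \<rho> then 1 else 0) = (\<Prod>i\<in>{0..<n}. g i (\<rho> i))"
          unfolding om_def g_def by (simp add: prod.distrib)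
      qed
      then have "(\<Sum>\<rho>\<in>R. om \<rho> * (if z \<in> W \<rho> then 1 else 0)) = (\<Sum>\<rho>\<in>R. \<Prod>i\<in>{0..<n}. g i (\<rho> i))"
        by (rule sum.cong[OF refl])
      also have "\<dots> = (\<Prod>i\<in>{0..<n}. \<Sum>r\<in>insert 3 (T3 - {x i}). g i r)"
        unfolding R_def by (rule prod_sum_PiE[symmetric]) auto
      also have "\<dots> = (\<Prod>i\<in>{0..<n}. if z i = x i then 1 + w else w + 1/2)"
      proof (rule prod.cong[OF refl])
        fix i assume "i \<in> {0..<n}"
        then have i: "i < n" by simp
        show "(\<Sum>r\<in>insert 3 (T3 - {x i}). g i r) = (if z i = x i then 1 + w else w + 1/2)"
          unfolding g_def by (rule opt_sum1[OF xv[OF i] zv[OF i]])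
      qed
      also have "\<dots> = (1 + w) ^ card {i\<in>{0..<n}. z i = x i} * (w + 1/2) ^ card {i\<in>{0..<n}. z i \<noteq> x i}"
        by (simp add: prod.If_cases Int_def set_diff_eq)
      also have "\<dots> = (w + 1/2) ^ dst n x z * (1 + w) ^ agr n x z"
      proof -
        have "{i\<in>{0..<n}. z i = x i} = {i. i < n \<and> x i = z i}" by force
        moreover have "{i\<in>{0..<n}. z i \<noteq> x i} = {i. i < n \<and> x i \<noteq> z i}" by force
        ultimately show ?thesis unfolding agr_def dst_def by simp
      qed
      finally show "(\<Sum>\<rho>\<in>R. om \<rho> * (if z \<in> W \<rho> then 1 else 0)) = (w + 1/2) ^ dst n x z * (1 + w) ^ agr n x z" .
    qed
    finally show ?thesis .
  qed
  have c: "(\<Sum>\<rho>\<in>R. om \<rho> * (2 * (3/2) ^ card (K \<rho>))) = 2 * (1 + 3/2 * w) ^ n"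
  proof -
    have "\<And>\<rho>. om \<rho> * (3/2) ^ card (K \<rho>) = (\<Prod>i\<in>{0..<n}. if \<rho> i = 3 then 3/2 * w else 1/2)"
    proof -
      fix \<rho>
      have "(3/2::real) ^ card (K \<rho>) = (\<Prod>i\<in>{0..<n}. if \<rho> i = 3 then 3/2 else 1)"
        unfolding K_def by (rule pow_card_prod) simp
      then have "om \<rho> * (3/2) ^ card (K \<rho>) =
          (\<Prod>i\<in>{0..<n}. (if \<rho> i = 3 then w else 1/2) * (if \<rho> i = 3 then 3/2 else 1))"
        unfolding om_def by (simp only: prod.distrib)
      also have "\<dots> = (\<Prod>i\<in>{0..<n}. if \<rho> i = 3 then 3/2 * w else 1/2)"
        by (rule prod.cong) auto
      finally show "om \<rho> * (3/2) ^ card (K \<rho>) = (\<Prod>i\<in>{0..<n}. if \<rho> i = 3 then 3/2 * w else 1/2)" .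
    qed
    note eqr = this
    have "(\<Sum>\<rho>\<in>R. om \<rho> * (2 * (3/2) ^ card (K \<rho>))) = (\<Sum>\<rho>\<in>R. 2 * (om \<rho> * (3/2) ^ card (K \<rho>)))"
      by (rule sum.cong) (simp_all add: mult.left_commute)
    also have "\<dots> = (\<Sum>\<rho>\<in>R. 2 * (\<Prod>i\<in>{0..<n}. if \<rho> i = 3 then 3/2 * w else 1/2))"
      by (simp only: eqr)
    also have "\<dots> = 2 * (\<Sum>\<rho>\<in>R. \<Prod>i\<in>{0..<n}. if \<rho> i = 3 then 3/2 * w else 1/2)"
      by (simp only: sum_distrib_left)
    also have "(\<Sum>\<rho>\<in>R. \<Prod>i\<in>{0..<n}. if \<rho> i = 3 then 3/2 * w else 1/2) =
               (\<Prod>i\<in>{0..<n}. \<Sum>r\<in>insert 3 (T3 - {x i}). if r = 3 then 3/2 * w else (1/2::real))"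
      unfolding R_def by (rule prod_sum_PiE[symmetric]) auto
    also have "\<dots> = (\<Prod>i\<in>{0..<n}. 1 + 3/2 * w)"
    proof (rule prod.cong[OF refl])
      fix i assume "i \<in> {0..<n}"
      then have i: "i < n" by simp
      show "(\<Sum>r\<in>insert 3 (T3 - {x i}). if r = 3 then 3/2 * w else (1/2::real)) = 1 + 3/2 * w"
        by (rule opt_sum2[OF xv[OF i]])
    qed
    finally show ?thesis by simp
  qed
  have "(\<Sum>z\<in>C. (w + 1/2) ^ dst n x z * (1 + w) ^ agr n x z) = (\<Sum>\<rho>\<in>R. om \<rho> * real (card (W \<rho>)))"
    using b by simp
  also have "\<dots> \<le> (\<Sum>\<rho>\<in>R. om \<rho> * (2 * (3/2) ^ card (K \<rho>)))"
    by (rule sum_mono) (rule mult_left_mono[OF a om_nn])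
  also have "\<dots> = 2 * (1 + 3/2 * w) ^ n" by (rule c)
  finally show ?thesis .
qed

lemma kraft:
  assumes tc: "trifferent_code n C" and x: "x \<in> C"
  shows "(\<Sum>y\<in>C-{x}. (1/2::real) ^ dst n x y) \<le> 1"
proof -
  have fC: "finite C" by (rule tc_finite[OF tc])
  have "(\<Sum>z\<in>C. (0 + 1/2::real) ^ dst n x z * (1 + 0) ^ agr n x z) \<le> 2 * (1 + 3/2 * 0) ^ n"
    by (rule tilted[OF tc x]) simp
  then have h: "(\<Sum>z\<in>C. (1/2::real) ^ dst n x z) \<le> 2" by simp
  have dx: "dst n x x = 0" unfolding dst_def by simp
  have "(\<Sum>z\<in>C. (1/2::real) ^ dst n x z) = (1/2) ^ dst n x x + (\<Sum>y\<in>C-{x}. (1/2::real) ^ dst n x y)"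
    using fC x by (simp add: sum.remove)
  then show ?thesis using h dx by simp
qed

lemma far_bound:
  fixes w :: real and t :: nat
  assumes tc: "trifferent_code n C" and x: "x \<in> C" and w0: "0 < w" and w1: "w \<le> 1"
  shows "(\<Sum>y\<in>{y\<in>C-{x}. agr n x y + 2*t \<le> dst n x y}. (1/2::real) ^ dst n x y) ^ 2
         \<le> 4 * (1 + w^2/4) ^ n / (1 + real t * w)"
proof -
  define Fs where "Fs = {y\<in>C-{x}. agr n x y + 2*t \<le> dst n x y}"
  define Far where "Far = (\<Sum>y\<in>Fs. (1/2::real) ^ dst n x y)"
  define \<rho> where "\<rho> = (1 + 2*w) / (1 + w)"
  define M where "M = (1 + w) ^ (2*n) * \<rho> ^ (n + 2*t)"
  define v where "v = (\<lambda>z. (1 + 2*w) ^ dst n x z * (1 + w) ^ agr n x z)"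
  have fC: "finite C" by (rule tc_finite[OF tc])
  have fFs: "finite Fs" unfolding Fs_def using fC by simp
  have FsC: "Fs \<subseteq> C" unfolding Fs_def by auto
  have \<rho>1: "\<rho> \<ge> 1" unfolding \<rho>_def using w0 by simp
  have \<rho>w: "(1 + w) * \<rho> = 1 + 2*w" unfolding \<rho>_def using w0 by simp
  have Mpos: "M > 0" unfolding M_def using w0 \<rho>1 by simp
  have Far0: "Far \<ge> 0" unfolding Far_def by (simp add: sum_nonneg)
  have T: "(\<Sum>z\<in>C. (w + 1/2) ^ dst n x z * (1 + w) ^ agr n x z) \<le> 2 * (1 + 3/2 * w) ^ n"
    by (rule tilted[OF tc x]) (use w0 in simp)
  have termeq: "\<And>z. (w + 1/2) ^ dst n x z * (1 + w) ^ agr n x z = (1/2) ^ dst n x z * v z"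
  proof -
    fix z
    have e: "(w + 1/2::real) = (1/2) * (1 + 2*w)" by simp
    have "(w + 1/2::real) ^ dst n x z = ((1/2) * (1 + 2*w)) ^ dst n x z" by (simp only: e)
    also have "\<dots> = (1/2) ^ dst n x z * (1 + 2*w) ^ dst n x z" by (rule power_mult_distrib)
    finally have "(w + 1/2::real) ^ dst n x z = (1/2) ^ dst n x z * (1 + 2*w) ^ dst n x z" .
    then show "(w + 1/2) ^ dst n x z * (1 + w) ^ agr n x z = (1/2) ^ dst n x z * v z"
      unfolding v_def by simp
  qed
  have vpos: "\<And>z. v z \<ge> 0" unfolding v_def using w0 by simp
  have vb: "\<And>y. y \<in> Fs \<Longrightarrow> sqrt M \<le> v y"
  proof -
    fix y assume y: "y \<in> Fs"
    define d where "d = dst n x y"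
    define m where "m = agr n x y"
    have md: "m + d = n" unfolding m_def d_def by (rule agr_dst)
    have dd: "n + 2*t \<le> 2*d" using y md unfolding Fs_def d_def m_def by simp
    have "v y = ((1 + w) * \<rho>) ^ d * (1 + w) ^ m" unfolding v_def d_def m_def \<rho>w ..
    also have "\<dots> = (1 + w) ^ (d + m) * \<rho> ^ d" by (simp add: power_mult_distrib power_add mult_ac)
    also have "d + m = n" using md by simp
    finally have ve: "v y = (1 + w) ^ n * \<rho> ^ d" .
    have "(v y)^2 = (1 + w) ^ (2*n) * \<rho> ^ (2*d)"
      unfolding ve by (simp add: power_mult_distrib power_mult[symmetric] mult.commute)
    also have "\<dots> \<ge> (1 + w) ^ (2*n) * \<rho> ^ (n + 2*t)"
      using power_increasing[OF dd \<rho>1] w0 by (intro mult_left_mono) auto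
    finally have "M \<le> (v y)^2" unfolding M_def .
    then have "sqrt M \<le> sqrt ((v y)^2)" by (rule real_sqrt_le_mono)
    then show "sqrt M \<le> v y" using vpos[of y] by simp
  qed
  have "Far * sqrt M = (\<Sum>y\<in>Fs. (1/2::real) ^ dst n x y * sqrt M)"
    unfolding Far_def by (simp add: sum_distrib_right)
  also have "\<dots> \<le> (\<Sum>y\<in>Fs. (1/2::real) ^ dst n x y * v y)"
    by (rule sum_mono) (rule mult_left_mono[OF vb], auto)
  also have "\<dots> \<le> (\<Sum>y\<in>C. (1/2::real) ^ dst n x y * v y)"
    by (rule sum_mono2[OF fC FsC]) (simp add: vpos)
  also have "\<dots> = (\<Sum>z\<in>C. (w + 1/2) ^ dst n x z * (1 + w) ^ agr n x z)"
    by (simp add: termeq)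
  also have "\<dots> \<le> 2 * (1 + 3/2 * w) ^ n" by (rule T)
  finally have fm: "Far * sqrt M \<le> 2 * (1 + 3/2 * w) ^ n" .
  have "(Far * sqrt M)^2 \<le> (2 * (1 + 3/2 * w) ^ n)^2"
    by (rule power_mono[OF fm]) (use Far0 Mpos in simp)
  then have fm2: "Far^2 * M \<le> 4 * ((1 + 3/2 * w)^2) ^ n"
    using Mpos by (simp add: power_mult_distrib power_mult[symmetric] mult.commute)
  have q: "(1 + 3/2 * w)^2 \<le> (1 + w^2/4) * ((1 + w) * (1 + 2*w))"
  proof -
    have "(1 + 3/2 * w)^2 = 1 + 3*w + 9/4 * w^2" by (simp add: power2_eq_square algebra_simps)
    moreover have "(1 + w^2/4) * ((1 + w) * (1 + 2*w)) = 1 + 3*w + 9/4 * w^2 + 3/4 * w^3 + 1/2 * w^4"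
      by (simp add: power2_eq_square power3_eq_cube algebra_simps power4_eq_xxxx)
    moreover have "3/4 * w^3 + 1/2 * w^4 \<ge> 0" using w0 by simp
    ultimately show ?thesis by linarith
  qed
  have num: "4 * ((1 + 3/2 * w)^2) ^ n \<le> 4 * ((1 + w^2/4) ^ n * ((1 + w) * (1 + 2*w)) ^ n)"
    using power_mono[OF q, of n] w0 by (simp add: power_mult_distrib)
  have Me: "M = ((1 + w) * (1 + 2*w)) ^ n * \<rho> ^ (2*t)"
  proof -
    have "M = ((1 + w)^2 * \<rho>) ^ n * \<rho> ^ (2*t)"
      unfolding M_def by (simp add: power_add power_mult power_mult_distrib)
    also have "(1 + w)^2 * \<rho> = (1 + w) * (1 + 2*w)" using \<rho>w by (simp add: power2_eq_square)
    finally show ?thesis .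
  qed
  have bern: "1 + real t * w \<le> \<rho> ^ (2*t)"
  proof -
    have "\<rho> \<ge> 1 + w/2" unfolding \<rho>_def using w0 w1 by (simp add: field_simps power2_eq_square)
    then have "(1 + w/2) ^ (2*t) \<le> \<rho> ^ (2*t)" by (rule power_mono) (use w0 in simp)
    moreover have "1 + real (2*t) * (w/2) \<le> (1 + w/2) ^ (2*t)"
      by (rule Bernoulli_inequality) (use w0 in simp)
    ultimately show ?thesis by simp
  qed
  have pp: "((1 + w) * (1 + 2*w)) ^ n > 0" using w0 by simp
  have "Far^2 \<le> 4 * ((1 + 3/2 * w)^2) ^ n / M"
    using fm2 Mpos by (simp add: field_simps)
  also have "\<dots> \<le> 4 * ((1 + w^2/4) ^ n * ((1 + w) * (1 + 2*w)) ^ n) / M"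
    by (rule divide_right_mono[OF num]) (use Mpos in simp)
  also have "\<dots> = 4 * (1 + w^2/4) ^ n / \<rho> ^ (2*t)"
  proof -
    have r0: "\<rho> ^ (2*t) \<noteq> 0" using \<rho>1 by simp
    have p0: "((1 + w) * (1 + 2*w)) ^ n \<noteq> 0" using w0 by simp
    show ?thesis unfolding Me using r0 p0 \<rho>1 by (auto simp: field_simps)
  qed
  also have "\<dots> \<le> 4 * (1 + w^2/4) ^ n / (1 + real t * w)"
  proof (rule divide_left_mono[OF bern])
    show "0 \<le> 4 * (1 + w^2/4) ^ n" by simp
    have "0 < \<rho> ^ (2*t)" using \<rho>1 by simp
    moreover have "0 < 1 + real t * w" using w0 by (simp add: add_pos_nonneg)
    ultimately show "0 < \<rho> ^ (2*t) * (1 + real t * w)" by (rule mult_pos_pos)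
  qed
  finally show ?thesis unfolding Far_def Fs_def .
qed

lemma per_x_bound:
  fixes w :: real and t :: nat
  assumes tc: "trifferent_code n C" and x: "x \<in> C" and w0: "0 < w" and w1: "w \<le> 1"
  shows "(\<Sum>y\<in>C-{x}. (1/2::real) ^ dst n x y * (1 - Hf (agr n x y) (dst n x y)))
         \<le> 8 * (real t + 1) / (real n + 1) + sqrt (4 * (1 + w^2/4) ^ n / (1 + real t * w))"
proof -
  define f where "f = (\<lambda>y. (1/2::real) ^ dst n x y * (1 - Hf (agr n x y) (dst n x y)))"
  define nb where "nb = 8 * (real t + 1) / (real n + 1)"
  define Fs where "Fs = {y\<in>C-{x}. agr n x y + 2*t \<le> dst n x y}"
  define Ns where "Ns = {y\<in>C-{x}. \<not> (agr n x y + 2*t \<le> dst n x y)}"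
  have fC: "finite C" by (rule tc_finite[OF tc])
  have nb0: "nb \<ge> 0" unfolding nb_def by simp
  have split: "(\<Sum>y\<in>C-{x}. f y) = (\<Sum>y\<in>Ns. f y) + (\<Sum>y\<in>Fs. f y)"
  proof -
    have "C - {x} = Ns \<union> Fs" unfolding Ns_def Fs_def by auto
    moreover have "Ns \<inter> Fs = {}" unfolding Ns_def Fs_def by auto
    moreover have "finite Ns" "finite Fs" unfolding Ns_def Fs_def using fC by auto
    ultimately show ?thesis by (simp add: sum.union_disjoint)
  qed
  have near: "(\<Sum>y\<in>Ns. f y) \<le> nb"
  proof -
    have "(\<Sum>y\<in>Ns. f y) \<le> (\<Sum>y\<in>Ns. (1/2::real) ^ dst n x y * nb)"
    proof (rule sum_mono)
      fix y assume y: "y \<in> Ns"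
      have md: "agr n x y + dst n x y = n" by (rule agr_dst)
      have "dst n x y < agr n x y + 2 * t" using y unfolding Ns_def by simp
      then have "1 - Hf (agr n x y) (dst n x y) \<le> 8 * (real t + 1) / (real (agr n x y) + real (dst n x y) + 1)"
        by (rule Hf_near)
      also have "real (agr n x y) + real (dst n x y) = real n" using md by (metis of_nat_add)
      finally have "1 - Hf (agr n x y) (dst n x y) \<le> nb" unfolding nb_def .
      then show "f y \<le> (1/2::real) ^ dst n x y * nb" unfolding f_def
        by (intro mult_left_mono) auto
    qed
    also have "\<dots> = nb * (\<Sum>y\<in>Ns. (1/2::real) ^ dst n x y)"
      by (simp add: sum_distrib_left mult.commute)
    also have "\<dots> \<le> nb * (\<Sum>y\<in>C-{x}. (1/2::real) ^ dst n x y)"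
    proof (rule mult_left_mono[OF _ nb0])
      show "(\<Sum>y\<in>Ns. (1/2::real) ^ dst n x y) \<le> (\<Sum>y\<in>C-{x}. (1/2::real) ^ dst n x y)"
        by (rule sum_mono2) (use fC in \<open>auto simp: Ns_def\<close>)
    qed
    also have "\<dots> \<le> nb * 1" by (rule mult_left_mono[OF kraft[OF tc x] nb0])
    finally show ?thesis by simp
  qed
  have far: "(\<Sum>y\<in>Fs. f y) \<le> sqrt (4 * (1 + w^2/4) ^ n / (1 + real t * w))"
  proof -
    have "(\<Sum>y\<in>Fs. f y) \<le> (\<Sum>y\<in>Fs. (1/2::real) ^ dst n x y)"
    proof (rule sum_mono)
      fix y
      have "1 - Hf (agr n x y) (dst n x y) \<le> 1" using Hf_nonneg by simp
      then show "f y \<le> (1/2::real) ^ dst n x y" unfolding f_def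
        using mult_left_mono[of "1 - Hf (agr n x y) (dst n x y)" 1 "(1/2::real) ^ dst n x y"] by simp
    qed
    also have "\<dots> \<le> sqrt (4 * (1 + w^2/4) ^ n / (1 + real t * w))"
      by (rule real_le_rsqrt) (unfold Fs_def, rule far_bound[OF tc x w0 w1])
    finally show ?thesis .
  qed
  show ?thesis using split near far unfolding f_def nb_def by linarith
qed

lemma main_final:
  fixes w :: real and t :: nat
  assumes tc: "trifferent_code n C" and w0: "0 < w" and w1: "w \<le> 1"
  shows "real (card C) * 2 ^ n * (2 - (8 * (real t + 1) / (real n + 1) + sqrt (4 * (1 + w^2/4) ^ n / (1 + real t * w))))
         \<le> 2 * 3 ^ n"
proof -
  define \<delta> where "\<delta> = 8 * (real t + 1) / (real n + 1) + sqrt (4 * (1 + w^2/4) ^ n / (1 + real t * w))"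
  have pow: "\<And>x y. (2::real) ^ agr n x y = 2 ^ n * (1/2) ^ dst n x y"
  proof -
    fix x y
    have "(2::real) ^ n = 2 ^ agr n x y * 2 ^ dst n x y"
      using agr_dst[of n x y] by (metis power_add)
    then show "(2::real) ^ agr n x y = 2 ^ n * (1/2) ^ dst n x y"
      by (simp add: power_one_over field_simps)
  qed
  have "(\<Sum>x\<in>C. \<Sum>y\<in>C-{x}. 2 ^ agr n x y * (1 - Hf (agr n x y) (dst n x y))) =
        (\<Sum>x\<in>C. 2 ^ n * (\<Sum>y\<in>C-{x}. (1/2::real) ^ dst n x y * (1 - Hf (agr n x y) (dst n x y))))"
    by (simp add: pow sum_distrib_left mult.assoc)
  also have "\<dots> \<le> (\<Sum>x\<in>C. 2 ^ n * \<delta>)"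
    by (rule sum_mono, rule mult_left_mono) (use per_x_bound[OF tc _ w0 w1] in \<open>auto simp: \<delta>_def\<close>)
  also have "\<dots> = real (card C) * 2 ^ n * \<delta>" by simp
  finally have S: "(\<Sum>x\<in>C. \<Sum>y\<in>C-{x}. 2 ^ agr n x y * (1 - Hf (agr n x y) (dst n x y))) \<le> real (card C) * 2 ^ n * \<delta>" .
  have "2 * real (card C) * 2 ^ n \<le> 2 * 3 ^ n + real (card C) * 2 ^ n * \<delta>"
    using main_ineq[OF tc] S by linarith
  then show ?thesis unfolding \<delta>_def[symmetric] by (simp add: algebra_simps)
qed

definition fbound :: "nat \<Rightarrow> real" where
  "fbound n = 8 * (real n powr (3/4) + 1) / (real n + 1) + sqrt (8 / (1 + (real n powr (3/4) - 1) / sqrt (real n)))"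

lemma lim_aux: "(fbound \<longlongrightarrow> 0) sequentially"
  unfolding fbound_def by real_asymp

lemma bound_aux:
  fixes n :: nat
  assumes n1: "n \<ge> 1"
  defines "t \<equiv> nat \<lfloor>real n powr (3/4)\<rfloor>" and "w \<equiv> 1 / sqrt (real n)"
  shows "8 * (real t + 1) / (real n + 1) + sqrt (4 * (1 + w^2/4) ^ n / (1 + real t * w)) \<le> fbound n"
proof -
  define p where "p = real n powr (3/4)"
  have p1: "p \<ge> 1" unfolding p_def using n1 by (simp add: ge_one_powr_ge_zero)
  have tp: "real t \<le> p" unfolding t_def p_def[symmetric] using p1 by linarith
  have tp2: "real t \<ge> p - 1" unfolding t_def p_def[symmetric] using p1 by linarith
  have sn: "sqrt (real n) > 0" using n1 by simp
  have w0: "w > 0" unfolding w_def using sn by simp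
  have w2: "w^2 = 1 / real n" unfolding w_def using n1 by (simp add: power_divide)
  have a: "8 * (real t + 1) / (real n + 1) \<le> 8 * (p + 1) / (real n + 1)"
    using tp by (intro divide_right_mono) auto
  have e: "(1 + w^2/4) ^ n \<le> 2"
  proof -
    have "(1 + w^2/4) \<le> exp (w^2/4)" by (rule exp_ge_add_one_self)
    then have "(1 + w^2/4) ^ n \<le> exp (w^2/4) ^ n" by (rule power_mono) (simp add: w2)
    also have "\<dots> = exp (real n * (w^2/4))" by (rule exp_of_nat_mult[symmetric])
    also have "real n * (w^2/4) = 1/4" unfolding w2 using n1 by simp
    also have "exp (1/4::real) \<le> exp (1/2)" by simp
    also have "\<dots> \<le> 2" by (rule exp_half_le2)
    finally show ?thesis .
  qed
  have d1: "1 + (p - 1) / sqrt (real n) > 0" using p1 sn by (simp add: add_pos_nonneg)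
  have d2: "1 + real t * w \<ge> 1 + (p - 1) / sqrt (real n)"
    using tp2 w0 unfolding w_def by (simp add: divide_right_mono)
  have b: "4 * (1 + w^2/4) ^ n / (1 + real t * w) \<le> 8 / (1 + (p - 1) / sqrt (real n))"
  proof -
    have "4 * (1 + w^2/4) ^ n / (1 + real t * w) \<le> 8 / (1 + real t * w)"
      using e d1 d2 by (intro divide_right_mono) auto
    also have "\<dots> \<le> 8 / (1 + (p - 1) / sqrt (real n))"
      using d1 d2 by (intro divide_left_mono) auto
    finally show ?thesis .
  qed
  have "sqrt (4 * (1 + w^2/4) ^ n / (1 + real t * w)) \<le> sqrt (8 / (1 + (p - 1) / sqrt (real n)))"
    using b by (rule real_sqrt_le_mono)
  then show ?thesis using a unfolding fbound_def p_def by linarith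
qed


theorem proposition2:
  "\<forall>\<epsilon>::real. \<epsilon> > 0 \<longrightarrow> (\<exists>N::nat. \<forall>n\<ge>N. \<forall>C. trifferent_code n C \<longrightarrow>
      real (card C) \<le> (1 + \<epsilon>) * (3/2) ^ n)"
proof (intro allI impI)
  fix \<epsilon> :: real assume \<epsilon>: "\<epsilon> > 0"
  define e where "e = min \<epsilon> 1"
  have e0: "e > 0" and e1: "e \<le> 1" and ee: "e \<le> \<epsilon>" using \<epsilon> unfolding e_def by auto
  have "eventually (\<lambda>n. fbound n < e) sequentially"
    using lim_aux e0 by (rule order_tendstoD(2))
  moreover have "eventually (\<lambda>n::nat. n \<ge> 1) sequentially" by (rule eventually_ge_at_top)
  ultimately have "eventually (\<lambda>n. fbound n < e \<and> n \<ge> 1) sequentially" by (rule eventually_conj)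
  then obtain N where N: "\<And>n. n \<ge> N \<Longrightarrow> fbound n < e \<and> n \<ge> 1"
    unfolding eventually_sequentially by blast
  show "\<exists>N::nat. \<forall>n\<ge>N. \<forall>C. trifferent_code n C \<longrightarrow> real (card C) \<le> (1 + \<epsilon>) * (3/2) ^ n"
  proof (intro exI allI impI)
    fix n C assume n: "N \<le> n" and tc: "trifferent_code n C"
    define t where "t = nat \<lfloor>real n powr (3/4)\<rfloor>"
    define w where "w = 1 / sqrt (real n)"
    have n1: "n \<ge> 1" and fb: "fbound n < e" using N[OF n] by auto
    have w0: "0 < w" unfolding w_def using n1 by simp
    have w1: "w \<le> 1" unfolding w_def using n1 by simp
    define \<delta> where "\<delta> = 8 * (real t + 1) / (real n + 1) + sqrt (4 * (1 + w^2/4) ^ n / (1 + real t * w))"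
    have de: "\<delta> \<le> e" using bound_aux[OF n1] fb unfolding \<delta>_def t_def w_def by linarith
    have mf: "real (card C) * 2 ^ n * (2 - \<delta>) \<le> 2 * 3 ^ n"
      using main_final[OF tc w0 w1, of t] unfolding \<delta>_def .
    have "real (card C) * 2 ^ n * (2 - e) \<le> real (card C) * 2 ^ n * (2 - \<delta>)"
      using de by (intro mult_left_mono) auto
    then have h: "real (card C) * 2 ^ n * (2 - e) \<le> 2 * 3 ^ n" using mf by linarith
    have pos: "(2::real) ^ n * (2 - e) > 0" using e1 by simp
    have "real (card C) \<le> 2 * 3 ^ n / (2 ^ n * (2 - e))"
      using h pos by (simp add: field_simps)
    also have "\<dots> = (2 / (2 - e)) * (3/2) ^ n"
      using e1 by (simp add: power_divide field_simps)
    also have "\<dots> \<le> (1 + \<epsilon>) * (3/2) ^ n"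
    proof (rule mult_right_mono)
      have ee2: "e * e \<le> e" using e0 e1 by (simp add: mult_left_le_one_le)
      have "2 \<le> (1 + e) * (2 - e)" using ee2 by (simp add: algebra_simps)
      then have "2 / (2 - e) \<le> 1 + e" using e1 by (simp add: divide_le_eq)
      then show "2 / (2 - e) \<le> 1 + \<epsilon>" using ee by linarith
    qed simp
    finally show "real (card C) \<le> (1 + \<epsilon>) * (3/2) ^ n" .
  qed
qed

end
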